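(* Let $f(\mathbf{x})=\mathbf{x}^{T}A\mathbf{x}+b^{T}\mathbf{x}+1$ with $A\in\mathbb{R}^{n\times n}$ symmetric and $b\in\mathbb{R}^n$, and let $Q/(1,1)=A-\frac14 bb^{T}$. Then: (i) $f$ has a monic Hermitian determinantal representation of size $2$, i.e. there exist Hermitian $A_1,\dots,A_n\in\mathbb{C}^{2\times 2}$ with $f(\mathbf{x})=\det(I_2+x_1A_1+\dots+x_nA_n)$ for all $\mathbf{x}$, if and only if $Q/(1,1)$ is negative semidefinite and $\operatorname{rank}(Q/(1,1))\le 3$; (ii) $f$ has a monic symmetric determinantal representation of size $2$ (i.e. as in (i) but with $A_j$ real symmetric) if and only if $Q/(1,1)$ is negative semidefinite and $\operatorname{rank}(Q/(1,1))\le 2$. In particular, if $Q/(1,1)$ is negative semidefinite of rank exactly $3$, then $f$ has a monic Hermitian determinantal representation of size $2$ but no monic symmetric determinantal representation of size $2$.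
   Context: $Q=\begin{bmatrix}1 & b^T/2\\ b/2 & A\end{bmatrix}$ is the matrix representation of $f$, i.e. $f(\mathbf{x})=Z^T Q Z$ with $Z=(1,x_1,\dots,x_n)^T$, and $Q/(1,1)$ denotes the Schur complement of its $(1,1)$ entry. *)

theory Defs
  imports "HOL-Analysis.Analysis"
begin

definition quad_poly :: "real^'n^'n \<Rightarrow> real^'n \<Rightarrow> real^'n \<Rightarrow> real" where
  "quad_poly A b x = x \<bullet> (A *v x) + b \<bullet> x + 1"

text \<open>Schur complement Q/(1,1) of the (1,1) entry of Q = [[1, b^T/2],[b/2, A]], i.e. A - (1/4) b b^T.\<close>
definition schur11 :: "real^'n^'n \<Rightarrow> real^'n \<Rightarrow> real^'n^'n" where
  "schur11 A b = (\<chi> i j. A $ i $ j - (1/4) * (b $ i) * (b $ j))"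

definition symmetric_mat :: "'a^'n^'n \<Rightarrow> bool" where
  "symmetric_mat M \<longleftrightarrow> transpose M = M"

definition hermitian_mat :: "complex^'n^'n \<Rightarrow> bool" where
  "hermitian_mat M \<longleftrightarrow> (\<forall>i j. M $ i $ j = cnj (M $ j $ i))"

definition neg_semidef :: "real^'n^'n \<Rightarrow> bool" where
  "neg_semidef M \<longleftrightarrow> symmetric_mat M \<and> (\<forall>x. x \<bullet> (M *v x) \<le> 0)"

definition has_monic_herm_rep2 :: "(real^'n \<Rightarrow> real) \<Rightarrow> bool" where
  "has_monic_herm_rep2 f \<longleftrightarrow>
     (\<exists>As :: 'n \<Rightarrow> complex^2^2. (\<forall>j. hermitian_mat (As j)) \<and>
        (\<forall>x. complex_of_real (f x) = det (mat 1 + (\<Sum>j\<in>UNIV. (x $ j) *\<^sub>R As j))))"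

definition has_monic_sym_rep2 :: "(real^'n \<Rightarrow> real) \<Rightarrow> bool" where
  "has_monic_sym_rep2 f \<longleftrightarrow>
     (\<exists>As :: 'n \<Rightarrow> real^2^2. (\<forall>j. symmetric_mat (As j)) \<and>
        (\<forall>x. f x = det (mat 1 + (\<Sum>j\<in>UNIV. (x $ j) *\<^sub>R As j))))"

end

theory Submission
  imports Defs
begin


definition outer :: "real^'n \<Rightarrow> real^'n^'n" where
  "outer w = (\<chi> i j. w$i * w$j)"

lemma outer_mv: "outer w *v x = (w \<bullet> x) *\<^sub>R w"
  by (simp add: outer_def vec_eq_iff matrix_vector_mult_def inner_vec_def sum_distrib_left mult_ac)

lemma outer_q: "x \<bullet> (outer w *v x) = (w \<bullet> x)^2"
  by (simp add: outer_mv power2_eq_square inner_commute)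

lemma outer_sym: "symmetric_mat (outer w)"
  by (simp add: symmetric_mat_def outer_def transpose_def vec_eq_iff mult.commute)

lemma sym_swap:
  fixes M :: "real^'n^'n"
  assumes "symmetric_mat M"
  shows "x \<bullet> (M *v y) = y \<bullet> (M *v x)"
proof -
  have "x \<bullet> (M *v y) = (x v* M) \<bullet> y" by (rule dot_lmul_matrix[symmetric])
  also have "x v* M = transpose M *v x" by (rule transpose_matrix_vector[symmetric])
  also have "transpose M = M" using assms by (simp add: symmetric_mat_def)
  finally show ?thesis by (simp add: inner_commute)
qed

lemma sym_zero:
  fixes M :: "real^'n^'n"
  assumes "symmetric_mat M" "\<And>x. x \<bullet> (M *v x) = 0"
  shows "M = 0"
proof -
  have "x \<bullet> (M *v y) = 0" for x y
  proof -
    have "(x+y) \<bullet> (M *v (x+y)) = 0" by (rule assms(2))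
    then have "x \<bullet> (M *v x) + x \<bullet> (M *v y) + y \<bullet> (M *v x) + y \<bullet> (M *v y) = 0"
      by (simp add: matrix_vector_right_distrib inner_add_left inner_add_right)
    then show ?thesis using assms sym_swap[OF assms(1), of x y] by simp
  qed
  then have "M *v y = 0" for y by (metis inner_eq_zero_iff)
  then show ?thesis using matrix_eq[of M 0] by simp
qed

lemma sym_entries: "symmetric_mat M \<longleftrightarrow> (\<forall>i j. M$i$j = M$j$i)"
  by (auto simp: symmetric_mat_def transpose_def vec_eq_iff)

lemma psd_step:
  fixes P :: "real^'n^'n"
  assumes sym: "symmetric_mat P" and psd: "\<And>x. 0 \<le> x \<bullet> (P *v x)" and nz: "P \<noteq> 0"
  obtains w where "symmetric_mat (P - outer w)" "\<And>x. 0 \<le> x \<bullet> ((P - outer w) *v x)"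
     "rank (P - outer w) < rank P"
proof -
  obtain e where ce: "e \<bullet> (P *v e) \<noteq> 0"
    using sym_zero[OF sym] nz by blast
  define c where "c = e \<bullet> (P *v e)"
  have cpos: "c > 0" using ce psd[of e] unfolding c_def by linarith
  define w where "w = (1 / sqrt c) *\<^sub>R (P *v e)"
  define P' where "P' = P - outer w"
  have P'v: "P' *v x = P *v x - (w \<bullet> x) *\<^sub>R w" for x
    by (simp add: P'_def outer_mv matrix_vector_mult_diff_rdistrib)
  have wx: "(w \<bullet> x)^2 = (x \<bullet> (P *v e))^2 / c" for x
    using cpos by (simp add: w_def power_divide power_mult_distrib inner_commute)
  have "symmetric_mat P'"
    using sym outer_sym[of w] unfolding sym_entries P'_def by simp
  moreover have "0 \<le> x \<bullet> (P' *v x)" for x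
  proof -
    define B where "B = x \<bullet> (P *v e)"
    define t where "t = - B / c"
    have B2: "e \<bullet> (P *v x) = B" using sym_swap[OF sym, of e x] by (simp add: B_def)
    have "0 \<le> (x + t *\<^sub>R e) \<bullet> (P *v (x + t *\<^sub>R e))" by (rule psd)
    also have "\<dots> = x \<bullet> (P *v x) + 2 * t * B + t^2 * c"
      by (simp add: matrix_vector_right_distrib inner_add_left inner_add_right
          matrix_vector_mult_scaleR B2 B_def[symmetric] c_def[symmetric] power2_eq_square algebra_simps)
    also have "\<dots> = x \<bullet> (P *v x) - B^2 / c"
      using cpos by (simp add: t_def field_simps power2_eq_square)
    finally have "B^2 / c \<le> x \<bullet> (P *v x)" by simp
    moreover have "x \<bullet> (P' *v x) = x \<bullet> (P *v x) - (w \<bullet> x)^2"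
      by (simp add: P'v inner_diff_right power2_eq_square inner_commute)
    ultimately show ?thesis using wx[of x] by (simp add: B_def)
  qed
  moreover have "rank P' < rank P"
  proof -
    have sub: "range ((*v) P') \<subseteq> span (range ((*v) P))"
    proof
      fix y assume "y \<in> range ((*v) P')"
      then obtain x where y: "y = P' *v x" by auto
      have "y = P *v (x - ((w \<bullet> x) / sqrt c) *\<^sub>R e)"
        by (simp add: y P'v matrix_vector_mult_diff_distrib matrix_vector_mult_scaleR w_def)
      then show "y \<in> span (range ((*v) P))" by (simp add: span_base)
    qed
    have orth: "span (range ((*v) P')) \<subseteq> {y. e \<bullet> y = 0}"
    proof (rule span_minimal[OF _ subspace_hyperplane], clarify)
      fix x
      have "e \<bullet> (P' *v x) = x \<bullet> (P' *v e)"
        using sym_swap[OF \<open>symmetric_mat P'\<close>] by blast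
      also have "P' *v e = 0"
        using cpos by (simp add: P'v w_def c_def[symmetric] inner_commute)
      finally show "e \<bullet> (P' *v x) = 0" by simp
    qed
    have "P *v e \<notin> {y. e \<bullet> y = 0}" using cpos by (simp add: c_def)
    moreover have "P *v e \<in> span (range ((*v) P))" by (simp add: span_base)
    ultimately have "span (range ((*v) P')) \<subset> span (range ((*v) P))"
      using orth sub span_minimal[OF sub subspace_span] by blast
    then show ?thesis by (simp add: rank_dim_range dim_psubset)
  qed
  ultimately show ?thesis using that P'_def by blast
qed

lemma psd_decomp:
  fixes P :: "real^'n^'n"
  assumes "symmetric_mat P" "\<And>x. 0 \<le> x \<bullet> (P *v x)" "rank P \<le> k"
  shows "\<exists>w. P = (\<Sum>i<k. outer (w i))"
  using assms
proof (induction k arbitrary: P)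
  case 0
  then show ?case by (simp add: rank_eq_0)
next
  case (Suc k)
  show ?case
  proof (cases "P = 0")
    case True
    have "outer (0::real^'n) = 0" by (simp add: outer_def vec_eq_iff)
    then show ?thesis using True by (intro exI[of _ "\<lambda>_. 0"]) simp
  next
    case False
    obtain w where w: "symmetric_mat (P - outer w)" "\<And>x. 0 \<le> x \<bullet> ((P - outer w) *v x)"
      "rank (P - outer w) < rank P"
      using psd_step[OF Suc.prems(1) Suc.prems(2) False] by blast
    obtain w' where w': "P - outer w = (\<Sum>i<k. outer (w' i))"
      using Suc.IH[OF w(1) w(2)] w(3) Suc.prems(3) by fastforce
    have "P = (\<Sum>i<Suc k. outer ((w'(k := w)) i))"
      using w' by (simp add: algebra_simps)
    then show ?thesis by blast
  qed
qed


lemma sum_mv: "(\<Sum>i\<in>I. M i) *v (x::real^'n) = (\<Sum>i\<in>I. M i *v x)"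
  by (induction I rule: infinite_finite_induct) (auto simp: matrix_vector_mult_add_rdistrib)

lemma sum_outer_mv: "(\<Sum>i<k. outer (w i)) *v x = (\<Sum>i<k. (w i \<bullet> x) *\<^sub>R w i)"
  by (simp add: sum_mv outer_mv)

lemma sum_outer_sym: "symmetric_mat (\<Sum>i<k. outer (w i))"
  unfolding sym_entries by (simp add: outer_def mult.commute)

lemma conv_rank:
  fixes S :: "real^'n^'n"
  assumes sym: "symmetric_mat S" and q: "\<And>x. x \<bullet> (S *v x) = - (\<Sum>i<k. (w i \<bullet> x)^2)"
  shows "neg_semidef S \<and> rank S \<le> k"
proof -
  have nsd: "neg_semidef S" unfolding neg_semidef_def using sym q
    by (simp add: sum_nonneg)
  define T where "T = S + (\<Sum>i<k. outer (w i))"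
  have "symmetric_mat T" using sym sum_outer_sym[of w k] unfolding sym_entries T_def by simp
  moreover have "x \<bullet> (T *v x) = 0" for x
    using q[of x] by (simp add: T_def matrix_vector_mult_add_rdistrib inner_add_right sum_outer_mv
        inner_sum_right power2_eq_square inner_commute)
  ultimately have "T = 0" by (rule sym_zero)
  then have Sv: "S *v x = - (\<Sum>i<k. (w i \<bullet> x) *\<^sub>R w i)" for x
  proof -
    have "S *v x + (\<Sum>i<k. outer (w i)) *v x = 0" using \<open>T = 0\<close>
      by (metis T_def matrix_vector_mult_0 matrix_vector_mult_add_rdistrib)
    then show ?thesis by (simp add: sum_outer_mv eq_neg_iff_add_eq_0)
  qed
  have "range ((*v) S) \<subseteq> span (w ` {..<k})"
  proof clarify
    fix x
    show "S *v x \<in> span (w ` {..<k})" unfolding Sv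
      by (intro span_neg span_sum span_scale span_base) auto
  qed
  then have "rank S \<le> card (w ` {..<k})" unfolding rank_dim_range by (rule dim_le_card) auto
  also have "\<dots> \<le> k" using card_image_le[of "{..<k}" w] by simp
  finally show ?thesis using nsd by simp
qed




lemma herm_det:
  fixes As :: "'n::finite \<Rightarrow> complex^2^2"
  assumes h11: "\<And>j. As j$1$1 = of_real (a$j)" and h22: "\<And>j. As j$2$2 = of_real (d$j)"
    and h12: "\<And>j. As j$1$2 = Complex (r$j) (s$j)" and h21: "\<And>j. As j$2$1 = Complex (r$j) (- s$j)"
  shows "det (mat 1 + (\<Sum>j\<in>UNIV. (x $ j) *\<^sub>R As j)) =
     of_real ((1 + a \<bullet> x) * (1 + d \<bullet> x) - (r \<bullet> x)^2 - (s \<bullet> x)^2)"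
proof -
  let ?M = "mat 1 + (\<Sum>j\<in>UNIV. (x $ j) *\<^sub>R As j)"
  have e11: "?M$1$1 = of_real (1 + a \<bullet> x)"
    by (simp add: mat_def h11 complex_eq_iff Re_sum Im_sum inner_vec_def mult.commute)
  have e22: "?M$2$2 = of_real (1 + d \<bullet> x)"
    by (simp add: mat_def h22 complex_eq_iff Re_sum Im_sum inner_vec_def mult.commute)
  have e12: "?M$1$2 = Complex (r \<bullet> x) (s \<bullet> x)"
    by (simp add: mat_def h12 complex_eq_iff Re_sum Im_sum inner_vec_def mult.commute)
  have e21: "?M$2$1 = Complex (r \<bullet> x) (- (s \<bullet> x))"
    by (simp add: mat_def h21 complex_eq_iff Re_sum Im_sum inner_vec_def mult.commute sum_negf)
  show ?thesis unfolding det_2 e11 e22 e12 e21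
    by (simp add: complex_eq_iff power2_eq_square algebra_simps)
qed

lemma sym_det:
  fixes As :: "'n::finite \<Rightarrow> real^2^2"
  assumes h11: "\<And>j. As j$1$1 = a$j" and h22: "\<And>j. As j$2$2 = d$j"
    and h12: "\<And>j. As j$1$2 = r$j" and h21: "\<And>j. As j$2$1 = r$j"
  shows "det (mat 1 + (\<Sum>j\<in>UNIV. (x $ j) *\<^sub>R As j)) =
     (1 + a \<bullet> x) * (1 + d \<bullet> x) - (r \<bullet> x)^2"
proof -
  let ?M = "mat 1 + (\<Sum>j\<in>UNIV. (x $ j) *\<^sub>R As j)"
  have e11: "?M$1$1 = 1 + a \<bullet> x"
    by (simp add: mat_def h11 inner_vec_def mult.commute)
  have e22: "?M$2$2 = 1 + d \<bullet> x"
    by (simp add: mat_def h22 inner_vec_def mult.commute)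
  have e12: "?M$1$2 = r \<bullet> x"
    by (simp add: mat_def h12 inner_vec_def mult.commute)
  have e21: "?M$2$1 = r \<bullet> x"
    by (simp add: mat_def h21 inner_vec_def mult.commute)
  show ?thesis unfolding det_2 e11 e22 e12 e21
    by (simp add: power2_eq_square)
qed




lemma mv_scaleR_l: "(c *\<^sub>R M) *v x = c *\<^sub>R (M *v (x::real^'n))"
  by (simp add: vec_eq_iff matrix_vector_mult_def sum_distrib_left mult.assoc)

lemma schur_q: "x \<bullet> (schur11 A b *v x) = x \<bullet> (A *v x) - (b \<bullet> x)^2 / 4"
proof -
  have "schur11 A b = A - (1/4) *\<^sub>R outer b"
    by (simp add: schur11_def outer_def vec_eq_iff)
  then show ?thesis
    by (simp add: matrix_vector_mult_diff_rdistrib inner_diff_right outer_q mv_scaleR_l)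
qed

lemma schur_sym: "symmetric_mat A \<Longrightarrow> symmetric_mat (schur11 A b)"
  by (simp add: sym_entries schur11_def mult.commute)

lemma mv_neg_l: "(- M) *v x = - (M *v (x::real^'n))"
  by (simp add: vec_eq_iff matrix_vector_mult_def sum_negf)
lemma mv_neg_r: "M *v (- x) = - (M *v (x::real^'n))"
  by (simp add: vec_eq_iff matrix_vector_mult_def sum_negf)

lemma rank_neg: "rank (- M) = rank (M::real^'n^'m)"
proof -
  have "range ((*v) (- M)) = range ((*v) M)"
  proof -
    have "(- M) *v x = M *v (- x)" for x
      by (simp add: mv_neg_l mv_neg_r)
    then show ?thesis by (auto simp: image_iff) (metis minus_minus)+
  qed
  then show ?thesis by (simp add: rank_dim_range)
qed

lemma coeff:
  assumes "\<And>x. quad_poly A b x = 1 + L x + B x" "\<And>x. L (-x) = - L x" "\<And>x. B (-x) = B x"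
  shows "b \<bullet> x = L x \<and> x \<bullet> (A *v x) = B x"
proof -
  have 1: "x \<bullet> (A *v x) + b \<bullet> x + 1 = 1 + L x + B x" using assms(1)[of x] by (simp add: quad_poly_def)
  have "quad_poly A b (-x) = 1 + L (-x) + B (-x)" by (rule assms(1))
  then have 2: "x \<bullet> (A *v x) - b \<bullet> x + 1 = 1 - L x + B x"
    using assms(2,3) by (simp add: quad_poly_def mv_neg_l mv_neg_r)
  from 1 2 show ?thesis by linarith
qed

lemma herm_iff:
  fixes A :: "real^'n^'n" and b :: "real^'n"
  assumes symA: "symmetric_mat A"
  shows "has_monic_herm_rep2 (quad_poly A b) \<longleftrightarrow> neg_semidef (schur11 A b) \<and> rank (schur11 A b) \<le> 3"
proof
  assume "has_monic_herm_rep2 (quad_poly A b)"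
  then obtain As :: "'n \<Rightarrow> complex^2^2" where H: "\<And>j. hermitian_mat (As j)"
    and R: "\<And>x. complex_of_real (quad_poly A b x) = det (mat 1 + (\<Sum>j\<in>UNIV. (x $ j) *\<^sub>R As j))"
    unfolding has_monic_herm_rep2_def by blast
  define a where "a = (\<chi> j. Re (As j$1$1))"
  define d where "d = (\<chi> j. Re (As j$2$2))"
  define r where "r = (\<chi> j. Re (As j$1$2))"
  define s where "s = (\<chi> j. Im (As j$1$2))"
  have H': "As j$p$q = cnj (As j$q$p)" for j p q using H[of j] unfolding hermitian_mat_def by blast
  have "As j$1$1 = of_real (a$j)" for j using H'[of j 1 1]
    by (simp add: a_def complex_eq_iff)
  moreover have "As j$2$2 = of_real (d$j)" for j using H'[of j 2 2]
    by (simp add: d_def complex_eq_iff)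
  moreover have "As j$1$2 = Complex (r$j) (s$j)" for j
    by (simp add: r_def s_def complex_eq_iff)
  moreover have "As j$2$1 = Complex (r$j) (- s$j)" for j using H'[of j 2 1]
    by (simp add: r_def s_def complex_eq_iff)
  ultimately have D: "\<And>x. det (mat 1 + (\<Sum>j\<in>UNIV. (x $ j) *\<^sub>R As j)) =
     of_real ((1 + a \<bullet> x) * (1 + d \<bullet> x) - (r \<bullet> x)^2 - (s \<bullet> x)^2)"
    by (rule herm_det)
  have Q: "quad_poly A b x = 1 + (a \<bullet> x + d \<bullet> x) + ((a \<bullet> x) * (d \<bullet> x) - (r \<bullet> x)^2 - (s \<bullet> x)^2)" for x
  proof -
    have "complex_of_real (quad_poly A b x) = complex_of_real ((1 + a \<bullet> x) * (1 + d \<bullet> x) - (r \<bullet> x)^2 - (s \<bullet> x)^2)"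
      using R[of x] D[of x] by simp
    then have "quad_poly A b x = (1 + a \<bullet> x) * (1 + d \<bullet> x) - (r \<bullet> x)^2 - (s \<bullet> x)^2"
      by (simp only: of_real_eq_iff)
    then show ?thesis by (simp add: algebra_simps)
  qed
  have C: "b \<bullet> x = a \<bullet> x + d \<bullet> x \<and> x \<bullet> (A *v x) = (a \<bullet> x) * (d \<bullet> x) - (r \<bullet> x)^2 - (s \<bullet> x)^2" for x
    by (rule coeff[OF Q]) auto
  define w where "w = (\<lambda>i::nat. if i = 0 then (1/2) *\<^sub>R (a - d) else if i = 1 then r else s)"
  have "x \<bullet> (schur11 A b *v x) = - (\<Sum>i<3. (w i \<bullet> x)^2)" for x
  proof -
    have "(\<Sum>i<3. (w i \<bullet> x)^2) = (w 0 \<bullet> x)^2 + (w 1 \<bullet> x)^2 + (w 2 \<bullet> x)^2"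
      by (simp add: numeral_3_eq_3 numeral_2_eq_2)
    also have "\<dots> = ((a \<bullet> x - d \<bullet> x)/2)^2 + (r \<bullet> x)^2 + (s \<bullet> x)^2"
      by (simp add: w_def inner_diff_left)
    finally show ?thesis using C[of x] schur_q[of x A b]
      by (simp add: power2_eq_square field_simps)
  qed
  then show "neg_semidef (schur11 A b) \<and> rank (schur11 A b) \<le> 3"
    by (rule conv_rank[OF schur_sym[OF symA]])
next
  assume N: "neg_semidef (schur11 A b) \<and> rank (schur11 A b) \<le> 3"
  let ?P = "- schur11 A b"
  have "symmetric_mat ?P" using N unfolding neg_semidef_def sym_entries by simp
  moreover have "0 \<le> x \<bullet> (?P *v x)" for x using N unfolding neg_semidef_def
    by (simp add: mv_neg_l mv_neg_r)
  moreover have "rank ?P \<le> 3" using N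
    by (simp add: rank_neg)
  ultimately obtain w where W: "?P = (\<Sum>i<(3::nat). outer (w i))" using psd_decomp by blast
  have QS: "x \<bullet> (schur11 A b *v x) = - ((w 0 \<bullet> x)^2 + (w 1 \<bullet> x)^2 + (w 2 \<bullet> x)^2)" for x
  proof -
    have "x \<bullet> (?P *v x) = (\<Sum>i<3. (w i \<bullet> x)^2)"
      unfolding W by (simp add: sum_mv outer_q inner_sum_right)
    then show ?thesis by (simp add: numeral_3_eq_3 numeral_2_eq_2 mv_neg_l mv_neg_r)
  qed
  define As :: "'n \<Rightarrow> complex^2^2" where "As = (\<lambda>j. \<chi> p q.
     if p = 1 then (if q = 1 then of_real (b$j/2 + w 0$j) else Complex (w 1$j) (w 2$j))
     else (if q = 1 then Complex (w 1$j) (- w 2$j) else of_real (b$j/2 - w 0$j)))"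
  have "hermitian_mat (As j)" for j
    unfolding hermitian_mat_def forall_2 by (simp add: As_def complex_eq_iff)
  moreover have "complex_of_real (quad_poly A b x) = det (mat 1 + (\<Sum>j\<in>UNIV. (x $ j) *\<^sub>R As j))" for x
  proof -
    have "det (mat 1 + (\<Sum>j\<in>UNIV. (x $ j) *\<^sub>R As j)) =
      of_real ((1 + ((1/2) *\<^sub>R b + w 0) \<bullet> x) * (1 + ((1/2) *\<^sub>R b - w 0) \<bullet> x) - (w 1 \<bullet> x)^2 - (w 2 \<bullet> x)^2)"
      by (rule herm_det) (simp_all add: As_def)
    also have "\<dots> = of_real (quad_poly A b x)"
    proof -
      have "(1 + ((1/2) *\<^sub>R b + w 0) \<bullet> x) * (1 + ((1/2) *\<^sub>R b - w 0) \<bullet> x) - (w 1 \<bullet> x)^2 - (w 2 \<bullet> x)^2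
         = (1 + (b \<bullet> x)/2 + w 0 \<bullet> x) * (1 + (b \<bullet> x)/2 - w 0 \<bullet> x) - (w 1 \<bullet> x)^2 - (w 2 \<bullet> x)^2"
        by (simp add: inner_add_left inner_diff_left add.assoc add_diff_eq)
      also have "\<dots> = quad_poly A b x"
        using QS[of x] schur_q[of x A b] unfolding quad_poly_def
        by (simp add: power2_eq_square field_simps)
      finally show ?thesis by simp
    qed
    finally show ?thesis by simp
  qed
  ultimately show "has_monic_herm_rep2 (quad_poly A b)"
    unfolding has_monic_herm_rep2_def by blast
qed




lemma sym_iff:
  fixes A :: "real^'n^'n" and b :: "real^'n"
  assumes symA: "symmetric_mat A"
  shows "has_monic_sym_rep2 (quad_poly A b) \<longleftrightarrow> neg_semidef (schur11 A b) \<and> rank (schur11 A b) \<le> 2"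
proof
  assume "has_monic_sym_rep2 (quad_poly A b)"
  then obtain As :: "'n \<Rightarrow> real^2^2" where H: "\<And>j. symmetric_mat (As j)"
    and R: "\<And>x. quad_poly A b x = det (mat 1 + (\<Sum>j\<in>UNIV. (x $ j) *\<^sub>R As j))"
    unfolding has_monic_sym_rep2_def by blast
  define a where "a = (\<chi> j. As j$1$1)"
  define d where "d = (\<chi> j. As j$2$2)"
  define r where "r = (\<chi> j. As j$1$2)"
  have H': "As j$p$q = As j$q$p" for j p q using H[of j] unfolding sym_entries by blast
  have "As j$1$1 = a$j" for j by (simp add: a_def)
  moreover have "As j$2$2 = d$j" for j by (simp add: d_def)
  moreover have "As j$1$2 = r$j" for j by (simp add: r_def)
  moreover have "As j$2$1 = r$j" for j using H'[of j 2 1] by (simp add: r_def)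
  ultimately have D: "\<And>x. det (mat 1 + (\<Sum>j\<in>UNIV. (x $ j) *\<^sub>R As j)) =
     (1 + a \<bullet> x) * (1 + d \<bullet> x) - (r \<bullet> x)^2"
    by (rule sym_det)
  have Q: "quad_poly A b x = 1 + (a \<bullet> x + d \<bullet> x) + ((a \<bullet> x) * (d \<bullet> x) - (r \<bullet> x)^2)" for x
    using R[of x] D[of x] by (simp add: algebra_simps)
  have C: "b \<bullet> x = a \<bullet> x + d \<bullet> x \<and> x \<bullet> (A *v x) = (a \<bullet> x) * (d \<bullet> x) - (r \<bullet> x)^2" for x
    by (rule coeff[OF Q]) auto
  define w where "w = (\<lambda>i::nat. if i = 0 then (1/2) *\<^sub>R (a - d) else r)"
  have "x \<bullet> (schur11 A b *v x) = - (\<Sum>i<2. (w i \<bullet> x)^2)" for x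
  proof -
    have "(\<Sum>i<2. (w i \<bullet> x)^2) = (w 0 \<bullet> x)^2 + (w 1 \<bullet> x)^2"
      by (simp add: numeral_2_eq_2)
    also have "\<dots> = ((a \<bullet> x - d \<bullet> x)/2)^2 + (r \<bullet> x)^2"
      by (simp add: w_def inner_diff_left)
    finally show ?thesis using C[of x] schur_q[of x A b]
      by (simp add: power2_eq_square field_simps)
  qed
  then show "neg_semidef (schur11 A b) \<and> rank (schur11 A b) \<le> 2"
    by (rule conv_rank[OF schur_sym[OF symA]])
next
  assume N: "neg_semidef (schur11 A b) \<and> rank (schur11 A b) \<le> 2"
  let ?P = "- schur11 A b"
  have "symmetric_mat ?P" using N unfolding neg_semidef_def sym_entries by simp
  moreover have "0 \<le> x \<bullet> (?P *v x)" for x using N unfolding neg_semidef_def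
    by (simp add: mv_neg_l mv_neg_r)
  moreover have "rank ?P \<le> 2" using N
    by (simp add: rank_neg)
  ultimately obtain w where W: "?P = (\<Sum>i<(2::nat). outer (w i))" using psd_decomp by blast
  have QS: "x \<bullet> (schur11 A b *v x) = - ((w 0 \<bullet> x)^2 + (w 1 \<bullet> x)^2)" for x
  proof -
    have "x \<bullet> (?P *v x) = (\<Sum>i<2. (w i \<bullet> x)^2)"
      unfolding W by (simp add: sum_mv outer_q inner_sum_right)
    then show ?thesis by (simp add: numeral_2_eq_2 mv_neg_l mv_neg_r)
  qed
  define As :: "'n \<Rightarrow> real^2^2" where "As = (\<lambda>j. \<chi> p q.
     if p = 1 then (if q = 1 then b$j/2 + w 0$j else w 1$j)
     else (if q = 1 then w 1$j else b$j/2 - w 0$j))"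
  have "symmetric_mat (As j)" for j
    unfolding sym_entries forall_2 by (simp add: As_def)
  moreover have "quad_poly A b x = det (mat 1 + (\<Sum>j\<in>UNIV. (x $ j) *\<^sub>R As j))" for x
  proof -
    have "det (mat 1 + (\<Sum>j\<in>UNIV. (x $ j) *\<^sub>R As j)) =
      (1 + ((1/2) *\<^sub>R b + w 0) \<bullet> x) * (1 + ((1/2) *\<^sub>R b - w 0) \<bullet> x) - (w 1 \<bullet> x)^2"
      by (rule sym_det) (simp_all add: As_def)
    also have "\<dots> = (1 + (b \<bullet> x)/2 + w 0 \<bullet> x) * (1 + (b \<bullet> x)/2 - w 0 \<bullet> x) - (w 1 \<bullet> x)^2"
      by (simp add: inner_add_left inner_diff_left add.assoc add_diff_eq)
    also have "\<dots> = quad_poly A b x"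
      using QS[of x] schur_q[of x A b] unfolding quad_poly_def
      by (simp add: power2_eq_square field_simps)
    finally show ?thesis by simp
  qed
  ultimately show "has_monic_sym_rep2 (quad_poly A b)"
    unfolding has_monic_sym_rep2_def by blast
qed

theorem mainTheorem2:
  fixes A :: "real^'n^'n" and b :: "real^'n"
  assumes "symmetric_mat A"
  shows "(has_monic_herm_rep2 (quad_poly A b) \<longleftrightarrow>
            neg_semidef (schur11 A b) \<and> rank (schur11 A b) \<le> 3)
       \<and> (has_monic_sym_rep2 (quad_poly A b) \<longleftrightarrow>
            neg_semidef (schur11 A b) \<and> rank (schur11 A b) \<le> 2)
       \<and> (neg_semidef (schur11 A b) \<and> rank (schur11 A b) = 3 \<longrightarrow>
            has_monic_herm_rep2 (quad_poly A b) \<and> \<not> has_monic_sym_rep2 (quad_poly A b))"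
  using herm_iff[OF assms] sym_iff[OF assms] by auto


end
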